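(* Let $n=p_1^{m_1}\cdots p_k^{m_k}$ be neither prime nor the square of a prime, and let $T=\prod_{i=1}^k(m_i+1)-2$. Then $$\kappa(\mathcal E_{\mathbb Z_n})=\begin{cases}T-1,& k=1,\ m_1>2,\\ 1,& k>1,\ m_i=1\text{ for all }i,\\ m+\eta,& k>1,\ m_i>1\text{ for at least one }i,\end{cases}$$ where $m=\prod_{i=1}^k m_i-1$ and $\eta=\min_{1\le j\le k}\big|[\langle p_j^{m_j}\rangle]\big|=\min_{1\le j\le k}\prod_{i\ne j}m_i$.
   Context: Primes $p_1<\dots<p_k$, positive integers $m_i$. Nonzero proper ideals of $\mathbb Z_n$ are uniquely $\langle p_1^{r_1}\cdots p_k^{r_k}\rangle$, $0\le r_i\le m_i$, $(r_i)\ne(0,\dots,0),(m_1,\dots,m_k)$; essential iff $r_j\ne m_j$ for all $j$. The essential ideal graph $\mathcal E_{\mathbb Z_n}$: vertices the nonzero proper ideals, distinct $I,K$ adjacent iff $I+K$ essential. For a nonessential nonzero proper ideal $I$, $\Xi_I=\{i:r_i=m_i\}$ and $[I]$ is the set of nonessential nonzero proper ideals $J$ with $\Xi_J=\Xi_I$. $\kappa(\Gamma)$ is the vertex connectivity (minimum number of vertices whose removal disconnects $\Gamma$; $\kappa(K_t)=t-1$). *)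

theory Defs
  imports "HOL-Number_Theory.Residues" "HOL-Algebra.Ideal" "HOL-Algebra.AbelCoset"
    "HOL-Computational_Algebra.Primes"
begin

text \<open>The ring Z_n is modelled by the HOL-Algebra ring residue_ring n (carrier {0..n-1}).\<close>

definition Zn :: "nat \<Rightarrow> int ring" where
  "Zn n = residue_ring (int n)"

definition nzp_ideals :: "nat \<Rightarrow> int set set" where
  "nzp_ideals n = {I. ideal I (Zn n) \<and> I \<noteq> {\<zero>\<^bsub>Zn n\<^esub>} \<and> I \<noteq> carrier (Zn n)}"

definition essential_ideal :: "int set \<Rightarrow> int ring \<Rightarrow> bool" where
  "essential_ideal I R \<longleftrightarrow> ideal I R \<and>
     (\<forall>J. ideal J R \<and> J \<noteq> {\<zero>\<^bsub>R\<^esub>} \<longrightarrow> I \<inter> J \<noteq> {\<zero>\<^bsub>R\<^esub>})"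

definition ess_adj :: "nat \<Rightarrow> int set \<Rightarrow> int set \<Rightarrow> bool" where
  "ess_adj n I K \<longleftrightarrow> I \<noteq> K \<and> essential_ideal (set_add (Zn n) I K) (Zn n)"

definition connected_in :: "('a \<Rightarrow> 'a \<Rightarrow> bool) \<Rightarrow> 'a set \<Rightarrow> bool" where
  "connected_in E W \<longleftrightarrow>
     (\<forall>u\<in>W. \<forall>v\<in>W. (\<lambda>x y. x \<in> W \<and> y \<in> W \<and> E x y)\<^sup>*\<^sup>* u v)"

text \<open>Vertex connectivity: least number of vertices whose removal leaves a disconnected
  graph or a graph with at most one vertex (so that kappa(K_t) = t - 1).\<close>
definition vertex_connectivity :: "'a set \<Rightarrow> ('a \<Rightarrow> 'a \<Rightarrow> bool) \<Rightarrow> nat" where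
  "vertex_connectivity V E =
     Min {card S | S. S \<subseteq> V \<and> (\<not> connected_in E (V - S) \<or> card (V - S) \<le> 1)}"

end

theory Submission
  imports Defs "HOL-Library.FuncSet"
begin


definition Jd :: "nat \<Rightarrow> nat \<Rightarrow> int set" where
  "Jd n d = {x::int. 0 \<le> x \<and> x < int n \<and> int d dvd x}"

lemma Zn_facts:
  assumes "n \<ge> 2"
  shows "carrier (Zn n) = {0..int n - 1}"
    "\<And>x y. x \<oplus>\<^bsub>Zn n\<^esub> y = (x + y) mod int n"
    "\<And>x y. x \<otimes>\<^bsub>Zn n\<^esub> y = (x * y) mod int n"
    "\<zero>\<^bsub>Zn n\<^esub> = 0"
    "\<And>x. \<ominus>\<^bsub>Zn n\<^esub> x = (- x) mod int n"
    "cring (Zn n)"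
proof -
  interpret R: residues "int n" "Zn n"
    using assms by unfold_locales (auto simp: Zn_def)
  show "carrier (Zn n) = {0..int n - 1}" by (rule R.res_carrier_eq)
  show "\<And>x y. x \<oplus>\<^bsub>Zn n\<^esub> y = (x + y) mod int n" by (rule R.res_add_eq)
  show "\<And>x y. x \<otimes>\<^bsub>Zn n\<^esub> y = (x * y) mod int n" by (rule R.res_mult_eq)
  show "\<zero>\<^bsub>Zn n\<^esub> = 0" by (rule R.res_zero_eq)
  show "\<And>x. \<ominus>\<^bsub>Zn n\<^esub> x = (- x) mod int n" by (rule R.res_neg_eq)
  show "cring (Zn n)" by (rule R.cring_axioms)
qed

lemma Jd_ideal:
  assumes n2: "n \<ge> 2" and dn: "d dvd n"
  shows "ideal (Jd n d) (Zn n)"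
proof -
  note F = Zn_facts[OF n2]
  interpret C: cring "Zn n" by (rule F(6))
  have nz: "d > 0" using dn n2 by (auto intro: Nat.gr0I)
  have dn': "int d dvd int n" using dn by simp
  have g: "int d mod int n \<in> carrier (Zn n)" using n2 by (simp add: F(1))
  have "Jd n d = PIdl\<^bsub>Zn n\<^esub> (int d mod int n)"
  proof (intro Set.set_eqI iffI)
    fix y assume y: "y \<in> Jd n d"
    then obtain c where c: "y = int d * c" and y0: "0 \<le> y" and yn: "y < int n" unfolding Jd_def by auto
    have c0: "0 \<le> c" using c y0 nz by (simp add: zero_le_mult_iff)
    have "c \<le> y" using c c0 nz by (simp add: mult_le_cancel_right1)
    hence cc: "c \<in> carrier (Zn n)" using c0 yn by (simp add: F(1))
    have "c \<otimes>\<^bsub>Zn n\<^esub> (int d mod int n) = y"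
      using y0 yn c by (simp add: F(3) mod_mult_right_eq mult.commute)
    thus "y \<in> PIdl\<^bsub>Zn n\<^esub> (int d mod int n)" using cc unfolding cgenideal_def by blast
  next
    fix y assume "y \<in> PIdl\<^bsub>Zn n\<^esub> (int d mod int n)"
    then obtain x where y: "y = (x * (int d mod int n)) mod int n" unfolding cgenideal_def F(3) by auto
    have "y = (x * int d) mod int n" using y by (simp add: mod_mult_right_eq)
    moreover have "int d dvd (x * int d) mod int n"
      using dn' by (simp add: dvd_mod)
    ultimately show "y \<in> Jd n d" using n2 unfolding Jd_def by auto
  qed
  thus ?thesis using C.cgenideal_ideal[OF g] by simp
qed

lemma ideal_is_Jd:
  assumes n2: "n \<ge> 2" and I: "ideal I (Zn n)"
  shows "\<exists>d. d dvd n \<and> I = Jd n d"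
proof -
  note F = Zn_facts[OF n2]
  have asg: "additive_subgroup I (Zn n)" using I by (rule ideal.axioms(1))
  have Ic: "I \<subseteq> {0..int n - 1}" using additive_subgroup.a_subset[OF asg] F(1) by simp
  have I0: "0 \<in> I" using additive_subgroup.zero_closed[OF asg] F(4) by simp
  have mul: "c * x \<in> I" if "x \<in> I" "0 \<le> c" "c * x < int n" "0 \<le> c * x" for c x
  proof -
    have cc: "c mod int n \<in> carrier (Zn n)" using n2 by (simp add: F(1))
    have "c mod int n \<otimes>\<^bsub>Zn n\<^esub> x \<in> I" using ideal.I_l_closed[OF I that(1) cc] .
    moreover have "c mod int n \<otimes>\<^bsub>Zn n\<^esub> x = c * x"
      using that by (simp add: F(3) mod_mult_left_eq)
    ultimately show ?thesis by simp
  qed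
  have sub: "x - y \<in> I" if "x \<in> I" "y \<in> I" "y \<le> x" for x y
  proof -
    have "x \<oplus>\<^bsub>Zn n\<^esub> (\<ominus>\<^bsub>Zn n\<^esub> y) \<in> I"
      using additive_subgroup.a_closed[OF asg that(1) additive_subgroup.a_inv_closed[OF asg that(2)]] .
    moreover have "x \<oplus>\<^bsub>Zn n\<^esub> (\<ominus>\<^bsub>Zn n\<^esub> y) = x - y"
    proof -
      have "x \<oplus>\<^bsub>Zn n\<^esub> (\<ominus>\<^bsub>Zn n\<^esub> y) = (x + (- y) mod int n) mod int n" by (simp only: F(2) F(5))
      also have "\<dots> = (x + - y) mod int n" by (rule mod_add_right_eq)
      also have "\<dots> = (x - y) mod int n" by simp
      also have "\<dots> = x - y" using subsetD[OF Ic that(1)] subsetD[OF Ic that(2)] that(3) by (intro mod_pos_pos_trivial) auto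
      finally show ?thesis .
    qed
    ultimately show ?thesis by (simp only:)
  qed
  define S where "S = {x\<in>I. x > 0}"
  show ?thesis
  proof (cases "S = {}")
    case True
    hence "I = {0}" using I0 Ic unfolding S_def by force
    moreover have "Jd n n = {0}" unfolding Jd_def using n2 by (force dest: zdvd_imp_le)
    ultimately show ?thesis by (metis dvd_refl)
  next
    case False
    have "S \<subseteq> {0..int n - 1}" using Ic unfolding S_def by blast
    hence fS: "finite S" using finite_subset finite_atLeastAtMost_int by blast
    define d0 where "d0 = Min S"
    have d0S: "d0 \<in> S" using Min_in[OF fS False] d0_def by simp
    have d0min: "\<And>x. x \<in> S \<Longrightarrow> d0 \<le> x" using Min_le[OF fS] d0_def by simp
    have d0I: "d0 \<in> I" and d0p: "d0 > 0" using d0S S_def by auto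
    have d0n: "d0 < int n" using d0I Ic by auto
    have memI: "x \<in> I \<Longrightarrow> d0 dvd x" for x
    proof -
      assume xI: "x \<in> I"
      have x0: "0 \<le> x" "x < int n" using xI Ic by auto
      have "(x div d0) * d0 \<in> I"
      proof (rule mul[OF d0I])
        show "0 \<le> x div d0" using x0 d0p by (simp add: pos_imp_zdiv_nonneg_iff)
        have "x div d0 * d0 \<le> x" using d0p by (metis minus_div_mult_eq_mod pos_mod_sign diff_ge_0_iff_ge)
        thus "x div d0 * d0 < int n" using x0 by simp
        show "0 \<le> x div d0 * d0" using x0 d0p by (simp add: pos_imp_zdiv_nonneg_iff)
      qed
      moreover have "x div d0 * d0 \<le> x" using d0p by (metis minus_div_mult_eq_mod pos_mod_sign diff_ge_0_iff_ge)
      ultimately have "x - (x div d0) * d0 \<in> I" using sub xI by blast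
      hence "x mod d0 \<in> I" by (simp add: minus_div_mult_eq_mod[symmetric] mult.commute)
      moreover have "x mod d0 < d0" "x mod d0 \<ge> 0" using d0p by auto
      ultimately have "x mod d0 = 0" using d0min unfolding S_def by force
      thus "d0 dvd x" by auto
    qed
    have d0dvd: "d0 dvd int n"
    proof (rule ccontr)
      assume nd: "\<not> d0 dvd int n"
      define y where "y = (int n div d0) * d0"
      have ylt: "y < int n" using nd d0p unfolding y_def
        by (metis minus_div_mult_eq_mod pos_mod_sign diff_gt_0_iff_gt dvd_eq_mod_eq_0 order_le_less)
      have ypos: "y > 0" unfolding y_def using d0p d0n
        by (simp add: pos_imp_zdiv_pos_iff)
      have yI: "y \<in> I" unfolding y_def by (rule mul[OF d0I]) (use ylt ypos y_def d0p in \<open>auto simp: pos_imp_zdiv_nonneg_iff\<close>)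
      have "\<ominus>\<^bsub>Zn n\<^esub> y \<in> I" using additive_subgroup.a_inv_closed[OF asg yI] .
      moreover have "\<ominus>\<^bsub>Zn n\<^esub> y = int n mod d0"
      proof -
        have "\<ominus>\<^bsub>Zn n\<^esub> y = (- y) mod int n" by (simp add: F(5))
        also have "\<dots> = (int n - y) mod int n" by (metis add.commute diff_conv_add_uminus mod_add_self2)
        also have "\<dots> = int n - y" using ylt ypos by (intro mod_pos_pos_trivial) auto
        also have "\<dots> = int n mod d0" unfolding y_def by (simp add: minus_div_mult_eq_mod)
        finally show ?thesis .
      qed
      ultimately have "int n mod d0 \<in> I" by simp
      moreover have "int n mod d0 > 0" using nd d0p
        by (metis dvd_eq_mod_eq_0 order_le_less pos_mod_sign)
      moreover have "int n mod d0 < d0" using d0p by simp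
      ultimately show False using d0min unfolding S_def by force
    qed
    define d where "d = nat d0"
    have dd: "int d = d0" using d0p d_def by simp
    have "d dvd n" using d0dvd dd by (metis int_dvd_int_iff)
    moreover have "I = Jd n d"
    proof (intro Set.set_eqI iffI)
      fix x assume "x \<in> I" thus "x \<in> Jd n d" using memI Ic dd unfolding Jd_def by auto
    next
      fix x assume "x \<in> Jd n d"
      then obtain c where x: "x = d0 * c" "0 \<le> x" "x < int n" unfolding Jd_def dd by auto
      have "c * d0 \<in> I"
        apply (rule mul[OF d0I]) using x d0p by (auto simp: mult.commute zero_le_mult_iff)
      thus "x \<in> I" using x by (simp add: mult.commute)
    qed
    ultimately show ?thesis by blast
  qed
qed


lemma Jd_sub:
  assumes n2: "n \<ge> 2" and dn: "d dvd n" and en: "e dvd n" and sub: "Jd n d \<subseteq> Jd n e"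
  shows "e dvd d"
proof (cases "d = n")
  case True thus ?thesis using en by simp
next
  case False
  have "d \<le> n" using dn n2 by (simp add: dvd_imp_le)
  hence "d < n" using False by simp
  hence "int d \<in> Jd n d" unfolding Jd_def by simp
  hence "int d \<in> Jd n e" using sub by blast
  thus ?thesis unfolding Jd_def by simp
qed

lemma Jd_inj:
  assumes n2: "n \<ge> 2" and dn: "d dvd n" and en: "e dvd n" and eq: "Jd n d = Jd n e"
  shows "d = e"
  using Jd_sub[OF n2 dn en] Jd_sub[OF n2 en dn] eq by (simp add: dvd_antisym)

lemma Jd_n: "n \<ge> 2 \<Longrightarrow> Jd n n = {0}"
  unfolding Jd_def by (force dest: zdvd_imp_le)

lemma Jd_zero_iff:
  assumes n2: "n \<ge> 2" and dn: "d dvd n"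
  shows "Jd n d = {0} \<longleftrightarrow> d = n"
  using Jd_inj[OF n2 dn dvd_refl] Jd_n[OF n2] by auto

lemma Jd_1: assumes "n \<ge> 2" shows "Jd n 1 = carrier (Zn n)"
proof -
  have c: "carrier (Zn n) = {0..int n - 1}" using Zn_facts(1)[OF assms] .
  have "Jd n 1 = {0..int n - 1}" unfolding Jd_def atLeastAtMost_def atLeast_def atMost_def by force
  thus ?thesis using c by simp
qed

lemma Jd_carrier_iff:
  assumes n2: "n \<ge> 2" and dn: "d dvd n"
  shows "Jd n d = carrier (Zn n) \<longleftrightarrow> d = 1"
proof
  assume "Jd n d = carrier (Zn n)"
  hence "Jd n d = Jd n 1" using Jd_1[OF n2] by (rule trans[OF _ sym])
  thus "d = 1" by (rule Jd_inj[OF n2 dn one_dvd])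
next
  assume "d = 1" thus "Jd n d = carrier (Zn n)" using Jd_1[OF n2] by (simp only:)
qed

lemma Jd_inter:
  assumes n2: "n \<ge> 2" and dn: "d dvd n" and en: "e dvd n"
  shows "Jd n d \<inter> Jd n e = Jd n (lcm d e)"
proof -
  have "int d dvd x \<and> int e dvd x \<longleftrightarrow> int (lcm d e) dvd x" for x
    using lcm_least_iff[of "int d" "int e" x] lcm_int_int_eq[of d e] by simp
  thus ?thesis unfolding Jd_def by (intro Set.set_eqI) (simp only: Int_iff mem_Collect_eq, blast)
qed

lemma Jd_add:
  assumes n2: "n \<ge> 2" and dn: "d dvd n" and en: "e dvd n"
  shows "set_add (Zn n) (Jd n d) (Jd n e) = Jd n (gcd d e)"
proof -
  note F = Zn_facts[OF n2]
  have rg: "ring (Zn n)" using F(6) by (rule cring.axioms(1))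
  have id: "ideal (set_add (Zn n) (Jd n d) (Jd n e)) (Zn n)"
    by (rule ring.add_ideals[OF rg Jd_ideal[OF n2 dn] Jd_ideal[OF n2 en]])
  obtain g where gn: "g dvd n" and g: "set_add (Zn n) (Jd n d) (Jd n e) = Jd n g"
    using ideal_is_Jd[OF n2 id] by blast
  have mem: "a \<oplus>\<^bsub>Zn n\<^esub> b \<in> set_add (Zn n) A B" if "a \<in> A" "b \<in> B" for a b A B
    using that unfolding set_add_def' by blast
  have z: "0 \<in> Jd n k" for k unfolding Jd_def using n2 by simp
  have "Jd n d \<subseteq> Jd n g"
  proof
    fix a assume a: "a \<in> Jd n d"
    have "a \<oplus>\<^bsub>Zn n\<^esub> 0 = a" using a unfolding F(2) Jd_def by simp
    thus "a \<in> Jd n g" using mem[OF a z[of e]] g by simp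
  qed
  hence gd: "g dvd d" using Jd_sub[OF n2 dn gn] by simp
  have "Jd n e \<subseteq> Jd n g"
  proof
    fix a assume a: "a \<in> Jd n e"
    have "0 \<oplus>\<^bsub>Zn n\<^esub> a = a" using a unfolding F(2) Jd_def by simp
    thus "a \<in> Jd n g" using mem[OF z[of d] a] g by simp
  qed
  hence ge: "g dvd e" using Jd_sub[OF n2 en gn] by simp
  have "Jd n g \<subseteq> Jd n (gcd d e)"
  proof
    fix x assume "x \<in> Jd n g"
    hence "x \<in> set_add (Zn n) (Jd n d) (Jd n e)" using g by simp
    then obtain a b where ab: "a \<in> Jd n d" "b \<in> Jd n e" "x = a \<oplus>\<^bsub>Zn n\<^esub> b"
      unfolding set_add_def' by blast
    have x: "x = (a + b) mod int n" using ab(3) F(2) by simp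
    have "int (gcd d e) dvd a" using ab(1) unfolding Jd_def
      by (metis (mono_tags, lifting) dvd_trans gcd_dvd1 int_dvd_int_iff mem_Collect_eq)
    moreover have "int (gcd d e) dvd b" using ab(2) unfolding Jd_def
      by (metis (mono_tags, lifting) dvd_trans gcd_dvd2 int_dvd_int_iff mem_Collect_eq)
    moreover have "int (gcd d e) dvd int n" using dn by (metis dvd_trans gcd_dvd1 int_dvd_int_iff)
    ultimately have "int (gcd d e) dvd x" unfolding x by (simp add: dvd_mod)
    moreover have "0 \<le> x" "x < int n" unfolding x using n2 by auto
    ultimately show "x \<in> Jd n (gcd d e)" unfolding Jd_def by simp
  qed
  hence "gcd d e dvd g" using Jd_sub[OF n2 gn] dn by (meson dvd_trans gcd_dvd1)
  hence "g = gcd d e" using gd ge by (simp add: dvd_antisym)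
  thus ?thesis using g by simp
qed

lemma Jd_essential:
  assumes n2: "n \<ge> 2" and gn: "g dvd n"
  shows "essential_ideal (Jd n g) (Zn n) \<longleftrightarrow> (\<forall>f. f dvd n \<and> f \<noteq> n \<longrightarrow> lcm g f \<noteq> n)"
proof -
  note F = Zn_facts[OF n2]
  have ln: "lcm g f dvd n" if "f dvd n" for f using gn that by simp
  show ?thesis
  proof
    assume ess: "essential_ideal (Jd n g) (Zn n)"
    show "\<forall>f. f dvd n \<and> f \<noteq> n \<longrightarrow> lcm g f \<noteq> n"
    proof (intro allI impI)
      fix f assume f: "f dvd n \<and> f \<noteq> n"
      hence "ideal (Jd n f) (Zn n)" "Jd n f \<noteq> {0}" using Jd_ideal[OF n2] Jd_zero_iff[OF n2] by auto
      hence "Jd n g \<inter> Jd n f \<noteq> {0}" using ess F(4) unfolding essential_ideal_def by auto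
      hence "Jd n (lcm g f) \<noteq> {0}" using Jd_inter[OF n2 gn] f by simp
      thus "lcm g f \<noteq> n" using Jd_n[OF n2] by auto
    qed
  next
    assume H: "\<forall>f. f dvd n \<and> f \<noteq> n \<longrightarrow> lcm g f \<noteq> n"
    show "essential_ideal (Jd n g) (Zn n)"
      unfolding essential_ideal_def
    proof (intro conjI allI impI)
      show "ideal (Jd n g) (Zn n)" by (rule Jd_ideal[OF n2 gn])
      fix J assume J: "ideal J (Zn n) \<and> J \<noteq> {\<zero>\<^bsub>Zn n\<^esub>}"
      then obtain f where f: "f dvd n" "J = Jd n f" using ideal_is_Jd[OF n2] by blast
      have "f \<noteq> n" using J f Jd_n[OF n2] F(4) by auto
      hence "lcm g f \<noteq> n" using H f by auto
      hence "Jd n (lcm g f) \<noteq> {0}" using Jd_zero_iff[OF n2 ln[OF f(1)]] by simp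
      thus "Jd n g \<inter> J \<noteq> {\<zero>\<^bsub>Zn n\<^esub>}" using Jd_inter[OF n2 gn f(1)] f F(4) by simp
    qed
  qed
qed



lemma mult_pos_in_pf:
  fixes n p :: nat
  assumes "n > 0" "prime p" "multiplicity p n > 0"
  shows "p \<in> prime_factors n"
  using assms prime_multiplicity_gt_zero_iff[of p n] by (simp add: in_prime_factors_iff)

lemma mult_le_dvd:
  fixes g n p :: nat
  assumes "g dvd n" "n > 0"
  shows "multiplicity p g \<le> multiplicity p n"
  using dvd_imp_multiplicity_le assms by auto

lemma N1:
  fixes n g :: nat
  assumes n0: "n > 0" and gn: "g dvd n"
  shows "(\<forall>f. f dvd n \<and> f \<noteq> n \<longrightarrow> lcm g f \<noteq> n) \<longleftrightarrow>
         (\<forall>p\<in>prime_factors n. multiplicity p g < multiplicity p n)"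
proof
  assume H: "\<forall>f. f dvd n \<and> f \<noteq> n \<longrightarrow> lcm g f \<noteq> n"
  show "\<forall>p\<in>prime_factors n. multiplicity p g < multiplicity p n"
  proof (rule ccontr)
    assume "\<not> (\<forall>p\<in>prime_factors n. multiplicity p g < multiplicity p n)"
    then obtain p where pP: "p \<in> prime_factors n" and ge: "multiplicity p g \<ge> multiplicity p n" by auto
    have pp: "prime p" using pP by (simp add: in_prime_factors_iff)
    have g0: "g > 0" using gn n0 by (auto intro: Nat.gr0I)
    define M where "M = multiplicity p n"
    have M0: "M > 0" using pP prime_multiplicity_gt_zero_iff[of p n] unfolding M_def by (simp add: in_prime_factors_iff)
    define f where "f = n div p ^ M"
    have pMn: "p ^ M dvd n" unfolding M_def by (rule multiplicity_dvd)
    have nf: "n = p ^ M * f" unfolding f_def using pMn by simp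
    have f0: "f > 0" using nf n0 by (auto intro: Nat.gr0I)
    have fn: "f dvd n" using nf by simp
    have "p ^ M > 1" using M0 prime_gt_1_nat[OF pp] by (metis one_less_power)
    hence fne: "f \<noteq> n" using nf f0 by (metis mult_cancel2 nat_mult_1 less_irrefl)
    have pM0: "p ^ M \<noteq> 0" using pp by simp
    have "lcm g f = n"
    proof (rule multiplicity_eq_nat)
      show "0 < lcm g f" using g0 f0 by (simp add: lcm_pos_nat)
      show "0 < n" by (rule n0)
      fix q :: nat assume q: "prime q"
      have mq: "multiplicity q n = multiplicity q (p ^ M) + multiplicity q f"
        using nf pM0 f0 q by (simp add: prime_elem_multiplicity_mult_distrib)
      have lq: "multiplicity q (lcm g f) = max (multiplicity q g) (multiplicity q f)"
        using g0 f0 q by (simp add: multiplicity_lcm)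
      have gq: "multiplicity q g \<le> multiplicity q n" using mult_le_dvd[OF gn n0] .
      show "multiplicity q (lcm g f) = multiplicity q n"
      proof (cases "q = p")
        case True
        hence "multiplicity q (p ^ M) = M" using pp by simp
        hence "multiplicity q f = 0" using mq True M_def by simp
        thus ?thesis using lq gq ge True M_def by simp
      next
        case False
        hence "multiplicity q (p ^ M) = 0" using pp q by (simp add: multiplicity_distinct_prime_power)
        thus ?thesis using lq gq mq by simp
      qed
    qed
    thus False using H fn fne by blast
  qed
next
  assume H: "\<forall>p\<in>prime_factors n. multiplicity p g < multiplicity p n"
  show "\<forall>f. f dvd n \<and> f \<noteq> n \<longrightarrow> lcm g f \<noteq> n"
  proof (intro allI impI)
    fix f assume f: "f dvd n \<and> f \<noteq> n"
    show "lcm g f \<noteq> n"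
    proof
      assume L: "lcm g f = n"
      have g0: "g > 0" using gn n0 by (auto intro: Nat.gr0I)
      have f0: "f > 0" using f n0 by (auto intro: Nat.gr0I)
      have "\<exists>p. prime p \<and> multiplicity p f < multiplicity p n"
      proof (rule ccontr)
        assume "\<nexists>p. prime p \<and> multiplicity p f < multiplicity p n"
        hence "\<And>p. prime p \<Longrightarrow> multiplicity p n \<le> multiplicity p f" by (meson not_le)
        hence "n dvd f" using n0 by (intro multiplicity_le_imp_dvd) auto
        thus False using f dvd_antisym by blast
      qed
      then obtain p where p: "prime p" "multiplicity p f < multiplicity p n" by blast
      hence pP: "p \<in> prime_factors n" using n0 by (intro mult_pos_in_pf) auto
      have "multiplicity p n = max (multiplicity p g) (multiplicity p f)"
        using L g0 f0 p(1) multiplicity_lcm[of g f p] by simp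
      moreover have "multiplicity p g < multiplicity p n" using H pP by blast
      ultimately show False using p(2) by (simp add: max_def split: if_splits)
    qed
  qed
qed

lemma ess_adj_Jd:
  assumes n2: "n \<ge> 2" and dn: "d dvd n" and en: "e dvd n"
  shows "ess_adj n (Jd n d) (Jd n e) \<longleftrightarrow>
    d \<noteq> e \<and> (\<forall>p\<in>prime_factors n. \<not> (multiplicity p d = multiplicity p n \<and> multiplicity p e = multiplicity p n))"
proof -
  have n0: "n > 0" using n2 by simp
  have d0: "d \<noteq> 0" and e0: "e \<noteq> 0" using dn en n0 by auto
  have gn: "gcd d e dvd n" using dn by (meson dvd_trans gcd_dvd1)
  have "ess_adj n (Jd n d) (Jd n e) \<longleftrightarrow> d \<noteq> e \<and> essential_ideal (Jd n (gcd d e)) (Zn n)"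
    unfolding ess_adj_def Jd_add[OF n2 dn en] using Jd_inj[OF n2 dn en] by blast
  also have "\<dots> \<longleftrightarrow> d \<noteq> e \<and> (\<forall>p\<in>prime_factors n. multiplicity p (gcd d e) < multiplicity p n)"
    using Jd_essential[OF n2 gn] N1[OF n0 gn] by simp
  also have "\<dots> \<longleftrightarrow> d \<noteq> e \<and> (\<forall>p\<in>prime_factors n. \<not> (multiplicity p d = multiplicity p n \<and> multiplicity p e = multiplicity p n))"
  proof -
    have "multiplicity p (gcd d e) < multiplicity p n \<longleftrightarrow> \<not> (multiplicity p d = multiplicity p n \<and> multiplicity p e = multiplicity p n)"
      if "p \<in> prime_factors n" for p
    proof -
      have pp: "prime p" using that by (simp add: in_prime_factors_iff)
      have "multiplicity p (gcd d e) = min (multiplicity p d) (multiplicity p e)"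
        using d0 e0 pp by (simp add: multiplicity_gcd)
      moreover have "multiplicity p d \<le> multiplicity p n" "multiplicity p e \<le> multiplicity p n"
        using mult_le_dvd[OF dn n0] mult_le_dvd[OF en n0] by auto
      ultimately show ?thesis by (auto simp: min_def)
    qed
    thus ?thesis by auto
  qed
  finally show ?thesis .
qed

lemma nzp_Jd:
  assumes n2: "n \<ge> 2"
  shows "nzp_ideals n = Jd n ` {d. d dvd n \<and> d \<noteq> 1 \<and> d \<noteq> n}"
proof (intro Set.set_eqI iffI)
  fix I assume "I \<in> nzp_ideals n"
  hence I: "ideal I (Zn n)" "I \<noteq> {0}" "I \<noteq> carrier (Zn n)"
    unfolding nzp_ideals_def using Zn_facts(4)[OF n2] by auto
  then obtain d where d: "d dvd n" "I = Jd n d" using ideal_is_Jd[OF n2] by blast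
  have "d \<noteq> n" using I d Jd_n[OF n2] by auto
  moreover have "d \<noteq> 1" using I(3) d Jd_1[OF n2] by auto
  ultimately show "I \<in> Jd n ` {d. d dvd n \<and> d \<noteq> 1 \<and> d \<noteq> n}" using d by blast
next
  fix I assume "I \<in> Jd n ` {d. d dvd n \<and> d \<noteq> 1 \<and> d \<noteq> n}"
  then obtain d where d: "d dvd n" "d \<noteq> 1" "d \<noteq> n" "I = Jd n d" by blast
  have "ideal I (Zn n)" using Jd_ideal[OF n2 d(1)] d(4) by simp
  moreover have "I \<noteq> {0}" using Jd_zero_iff[OF n2 d(1)] d by simp
  moreover have "I \<noteq> carrier (Zn n)" using Jd_carrier_iff[OF n2 d(1)] d by simp
  ultimately show "I \<in> nzp_ideals n" unfolding nzp_ideals_def using Zn_facts(4)[OF n2] by simp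
qed



lemma count_divs:
  fixes n :: nat and B :: "nat \<Rightarrow> nat set"
  assumes n0: "n > 0" and B: "\<forall>p\<in>prime_factors n. B p \<subseteq> {0..multiplicity p n}"
  shows "card {d. d dvd n \<and> (\<forall>p\<in>prime_factors n. multiplicity p d \<in> B p)}
         = (\<Prod>p\<in>prime_factors n. card (B p))"
proof -
  define P where "P = prime_factors n"
  define X where "X = {d. d dvd n \<and> (\<forall>p\<in>P. multiplicity p d \<in> B p)}"
  define f where "f = (\<lambda>d::nat. restrict (\<lambda>p. multiplicity p d) P)"
  define f' where "f' = (\<lambda>g. \<Prod>p\<in>P. p ^ g p)"
  have fP: "finite P" unfolding P_def by simp
  have pr: "\<And>p. p \<in> P \<Longrightarrow> prime p" unfolding P_def by (simp add: in_prime_factors_iff)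
  have mf': "multiplicity q (f' g) = (if q \<in> P then g q else 0)" if "prime q" for q g
    unfolding f'_def using multiplicity_prod_prime_powers[OF fP pr that] by simp
  have f'pos: "f' g > 0" for g unfolding f'_def using pr
    by (simp add: prime_gt_0_nat prod_pos)
  have "bij_betw f X (PiE P B)"
  proof (rule bij_betw_byWitness[where f'=f'])
    show "\<forall>a\<in>X. f' (f a) = a"
    proof
      fix d assume d: "d \<in> X"
      have dn: "d dvd n" using d X_def by simp
      have d0: "d > 0" using dn n0 by (auto intro: Nat.gr0I)
      have "f' (f d) = (\<Prod>p\<in>P. p ^ multiplicity p d)" unfolding f'_def f_def by simp
      also have "\<dots> = d"
      proof (rule multiplicity_eq_nat)
        show "0 < (\<Prod>p\<in>P. p ^ multiplicity p d)" using pr by (simp add: prime_gt_0_nat prod_pos)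
        show "0 < d" by (rule d0)
        fix q :: nat assume q: "prime q"
        have "multiplicity q (\<Prod>p\<in>P. p ^ multiplicity p d) = (if q \<in> P then multiplicity q d else 0)"
          using multiplicity_prod_prime_powers[OF fP pr q] by simp
        moreover have "q \<notin> P \<Longrightarrow> multiplicity q d = 0"
        proof -
          assume "q \<notin> P"
          hence "\<not> q dvd n" using q n0 unfolding P_def by (simp add: in_prime_factors_iff)
          hence "\<not> q dvd d" using dn dvd_trans by blast
          thus "multiplicity q d = 0" by (simp add: not_dvd_imp_multiplicity_0)
        qed
        ultimately show "multiplicity q (\<Prod>p\<in>P. p ^ multiplicity p d) = multiplicity q d" by simp
      qed
      finally show "f' (f d) = d" .
    qed
    show "\<forall>a'\<in>PiE P B. f (f' a') = a'"
    proof
      fix g assume g: "g \<in> PiE P B"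
      show "f (f' g) = g"
      proof
        fix p show "f (f' g) p = g p"
        proof (cases "p \<in> P")
          case True
          have "f (f' g) p = multiplicity p (f' g)" unfolding f_def by (rule restrict_apply'[OF True])
          also have "\<dots> = g p" using mf'[OF pr[OF True]] True by (simp only: if_True)
          finally show ?thesis .
        next
          case False
          have "f (f' g) p = undefined" unfolding f_def using False by (metis restrict_apply)
          also have "\<dots> = g p" using PiE_arb[OF g False] by simp
          finally show ?thesis .
        qed
      qed
    qed
    show "f ` X \<subseteq> PiE P B"
    proof
      fix y assume "y \<in> f ` X"
      then obtain d where d: "d \<in> X" "y = f d" by blast
      have "\<forall>p\<in>P. multiplicity p d \<in> B p" using d(1) unfolding X_def by blast
      thus "y \<in> PiE P B" unfolding d(2) f_def by (simp only: restrict_PiE_iff)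
    qed
    show "f' ` PiE P B \<subseteq> X"
    proof
      fix x assume "x \<in> f' ` PiE P B"
      then obtain g where g: "g \<in> PiE P B" "x = f' g" by blast
      have "f' g dvd n"
      proof (rule multiplicity_le_imp_dvd)
        show "f' g \<noteq> 0" using f'pos[of g] by simp
        fix q :: nat assume q: "prime q"
        show "multiplicity q (f' g) \<le> multiplicity q n"
        proof (cases "q \<in> P")
          case True
          hence "g q \<in> B q" using g by auto
          hence "g q \<le> multiplicity q n" using B True unfolding P_def by (meson atLeastAtMost_iff subsetD)
          thus ?thesis using mf'[OF q] True by simp
        qed (use mf'[OF q] in simp)
      qed
      moreover have "\<forall>p\<in>P. multiplicity p (f' g) \<in> B p" using g mf' pr by auto
      ultimately show "x \<in> X" unfolding X_def g(2) by simp
    qed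
  qed
  hence "card X = card (PiE P B)" by (rule bij_betw_same_card)
  also have "\<dots> = (\<Prod>p\<in>P. card (B p))" by (rule card_PiE[OF fP])
  finally show ?thesis unfolding X_def P_def .
qed



lemma VC_eq:
  assumes fV: "finite V"
    and low: "\<And>S. S \<subseteq> V \<Longrightarrow> (\<not> connected_in E (V - S) \<or> card (V - S) \<le> 1) \<Longrightarrow> x \<le> card S"
    and ex: "S0 \<subseteq> V" "\<not> connected_in E (V - S0) \<or> card (V - S0) \<le> 1" "card S0 = x"
  shows "vertex_connectivity V E = x"
  unfolding vertex_connectivity_def
proof (rule Min_eqI)
  have "{card S |S. S \<subseteq> V \<and> (\<not> connected_in E (V - S) \<or> card (V - S) \<le> 1)} \<subseteq> card ` Pow V" by blast
  thus "finite {card S |S. S \<subseteq> V \<and> (\<not> connected_in E (V - S) \<or> card (V - S) \<le> 1)}"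
    using fV by (meson finite_Pow_iff finite_imageI finite_subset)
  show "\<And>y. y \<in> {card S |S. S \<subseteq> V \<and> (\<not> connected_in E (V - S) \<or> card (V - S) \<le> 1)} \<Longrightarrow> x \<le> y"
    using low by blast
  show "x \<in> {card S |S. S \<subseteq> V \<and> (\<not> connected_in E (V - S) \<or> card (V - S) \<le> 1)}"
    using ex by blast
qed

lemma isolated_vertex:
  assumes "v \<in> V" "v \<notin> S" "\<And>y. y \<in> V \<Longrightarrow> E v y \<Longrightarrow> y \<in> S"
  shows "\<not> connected_in E (V - S) \<or> card (V - S) \<le> 1"
proof (rule disjCI)
  assume "\<not> card (V - S) \<le> 1"
  hence c: "card (V - S) \<ge> 2" by simp
  have "\<exists>w\<in>V - S. w \<noteq> v"
  proof (rule ccontr)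
    assume "\<not> (\<exists>w\<in>V - S. w \<noteq> v)"
    hence "V - S \<subseteq> {v}" by blast
    hence "card (V - S) \<le> 1" using card_mono[of "{v}" "V - S"] by simp
    thus False using c by simp
  qed
  then obtain w where w: "w \<in> V - S" "w \<noteq> v" by blast
  show "\<not> connected_in E (V - S)"
  proof
    assume "connected_in E (V - S)"
    hence "(\<lambda>x y. x \<in> V - S \<and> y \<in> V - S \<and> E x y)\<^sup>*\<^sup>* v w"
      unfolding connected_in_def using assms w by blast
    thus False
    proof (cases rule: converse_rtranclpE)
      case base thus False using w by simp
    next
      case (step y) thus False using assms by blast
    qed
  qed
qed

lemma connected_hub:
  assumes "\<And>u. u \<in> W \<Longrightarrow> (\<lambda>x y. x \<in> W \<and> y \<in> W \<and> E x y)\<^sup>*\<^sup>* u h"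
    and "\<And>u. u \<in> W \<Longrightarrow> (\<lambda>x y. x \<in> W \<and> y \<in> W \<and> E x y)\<^sup>*\<^sup>* h u"
  shows "connected_in E W"
  unfolding connected_in_def using assms by (meson rtranclp_trans)

lemma card_low:
  assumes fV: "finite V" and "S \<subseteq> V" and "connected_in E (V - S) \<longrightarrow> card (V - S) \<le> 1"
    and conn: "card (V - S) > 1 \<Longrightarrow> connected_in E (V - S)"
  shows "card V - 1 \<le> card S"
proof -
  have "card (V - S) \<le> 1" using assms by (cases "card (V - S) > 1") auto
  moreover have "card (V - S) = card V - card S" using assms(2) fV by (simp add: card_Diff_subset finite_subset)
  ultimately show ?thesis by simp
qed

lemma L_hub:
  assumes fV: "finite V" and SV: "S \<subseteq> V"
    and valid: "\<not> connected_in E (V - S) \<or> card (V - S) \<le> 1"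
    and sym: "\<And>x y. E x y \<Longrightarrow> E y x"
    and hV: "h \<in> V" and hS: "h \<notin> S"
    and hub: "\<And>y. y \<in> V \<Longrightarrow> y \<noteq> h \<Longrightarrow> E h y"
  shows "card V - 1 \<le> card S"
proof (rule card_low[OF fV SV])
  let ?W = "V - S"
  let ?R = "\<lambda>x y. x \<in> ?W \<and> y \<in> ?W \<and> E x y"
  have "connected_in E ?W"
  proof (rule connected_hub[where h=h])
    fix u assume u: "u \<in> ?W"
    show "?R\<^sup>*\<^sup>* u h"
    proof (cases "u = h")
      case False thus ?thesis using u hV hS hub sym by (intro r_into_rtranclp) auto
    qed simp
    show "?R\<^sup>*\<^sup>* h u"
    proof (cases "u = h")
      case False thus ?thesis using u hV hS hub by (intro r_into_rtranclp) auto
    qed simp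
  qed
  thus "connected_in E ?W \<longrightarrow> card ?W \<le> 1" "card ?W > 1 \<Longrightarrow> connected_in E ?W"
    using valid by auto
qed

lemma L_classes:
  assumes fV: "finite V" and SV: "S \<subseteq> V"
    and valid: "\<not> connected_in E (V - S) \<or> card (V - S) \<le> 1"
    and sym: "\<And>x y. E x y \<Longrightarrow> E y x"
    and CV: "\<And>q. q \<in> Q \<Longrightarrow> C q \<subseteq> V"
    and cross: "\<And>q q' c c'. q \<in> Q \<Longrightarrow> q' \<in> Q \<Longrightarrow> q \<noteq> q' \<Longrightarrow> c \<in> C q \<Longrightarrow> c' \<in> C q' \<Longrightarrow> E c c'"
    and cover: "\<And>x. x \<in> V \<Longrightarrow> \<exists>q\<in>Q. \<forall>c\<in>C q. c \<noteq> x \<longrightarrow> E x c"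
    and notall: "\<And>q. q \<in> Q \<Longrightarrow> \<not> C q \<subseteq> S"
  shows "card V - 1 \<le> card S"
proof (rule card_low[OF fV SV])
  let ?W = "V - S"
  let ?R = "\<lambda>x y. x \<in> ?W \<and> y \<in> ?W \<and> E x y"
  have "\<forall>q\<in>Q. \<exists>c. c \<in> C q \<and> c \<notin> S" using notall by blast
  then obtain rep where rep: "\<And>q. q \<in> Q \<Longrightarrow> rep q \<in> C q \<and> rep q \<notin> S" by metis
  have repW: "q \<in> Q \<Longrightarrow> rep q \<in> ?W" for q using rep CV by blast
  have to_rep: "\<exists>q\<in>Q. ?R\<^sup>*\<^sup>* u (rep q) \<and> ?R\<^sup>*\<^sup>* (rep q) u" if u: "u \<in> ?W" for u
  proof -
    obtain q where q: "q \<in> Q" "\<forall>c\<in>C q. c \<noteq> u \<longrightarrow> E u c" using cover u by blast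
    show ?thesis
    proof (cases "rep q = u")
      case True thus ?thesis using q by auto
    next
      case False
      hence "E u (rep q)" using q rep by blast
      hence "?R u (rep q)" "?R (rep q) u" using u repW[OF q(1)] sym by auto
      thus ?thesis using q by blast
    qed
  qed
  have rr: "?R\<^sup>*\<^sup>* (rep q) (rep q')" if "q \<in> Q" "q' \<in> Q" for q q'
  proof (cases "q = q'")
    case False
    hence "E (rep q) (rep q')" using cross that rep by blast
    thus ?thesis using repW that by (intro r_into_rtranclp) auto
  qed simp
  have "connected_in E ?W"
    unfolding connected_in_def
  proof (intro ballI)
    fix u v assume u: "u \<in> ?W" and v: "v \<in> ?W"
    obtain q where q: "q \<in> Q" "?R\<^sup>*\<^sup>* u (rep q)" using to_rep[OF u] by blast
    obtain q' where q': "q' \<in> Q" "?R\<^sup>*\<^sup>* (rep q') v" using to_rep[OF v] by blast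
    show "?R\<^sup>*\<^sup>* u v" using q q' rr by (meson rtranclp_trans)
  qed
  thus "connected_in E ?W \<longrightarrow> card ?W \<le> 1" "card ?W > 1 \<Longrightarrow> connected_in E ?W"
    using valid by auto
qed



definition fullp :: "nat \<Rightarrow> nat \<Rightarrow> nat \<Rightarrow> bool" where
  "fullp n p d \<longleftrightarrow> multiplicity p d = multiplicity p n"
definition Dset :: "nat \<Rightarrow> nat set" where
  "Dset n = {d. d dvd n \<and> d \<noteq> 1 \<and> d \<noteq> n}"
definition DE :: "nat \<Rightarrow> nat set" where
  "DE n = {d\<in>Dset n. \<forall>p\<in>prime_factors n. \<not> fullp n p d}"
definition DC :: "nat \<Rightarrow> nat \<Rightarrow> nat set" where
  "DC n q = {d. d dvd n \<and> fullp n q d \<and> (\<forall>p\<in>prime_factors n - {q}. \<not> fullp n p d)}"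

context
  fixes n :: nat
  assumes n2: "n \<ge> 2"
begin

lemma n0: "n > 0" using n2 by simp

lemma all_full: "d dvd n \<Longrightarrow> \<forall>p\<in>prime_factors n. fullp n p d \<Longrightarrow> d = n"
proof -
  assume dn: "d dvd n" and H: "\<forall>p\<in>prime_factors n. fullp n p d"
  have d0: "d > 0" using dn n0 by (auto intro: Nat.gr0I)
  show "d = n"
  proof (rule multiplicity_eq_nat[OF d0 n0])
    fix q :: nat assume q: "prime q"
    show "multiplicity q d = multiplicity q n"
    proof (cases "q \<in> prime_factors n")
      case True thus ?thesis using H unfolding fullp_def by blast
    next
      case False
      hence "\<not> q dvd n" using q n0 by (simp add: in_prime_factors_iff)
      hence "\<not> q dvd d" using dn dvd_trans by blast
      hence "multiplicity q d = 0" by (simp add: not_dvd_imp_multiplicity_0)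
      moreover have "multiplicity q n = 0" using \<open>\<not> q dvd n\<close> by (simp add: not_dvd_imp_multiplicity_0)
      ultimately show ?thesis by simp
    qed
  qed
qed

lemma mult_pos: "p \<in> prime_factors n \<Longrightarrow> multiplicity p n > 0"
  using prime_multiplicity_gt_zero_iff[of p n] n0 by (simp add: in_prime_factors_iff)

lemma Dset_dvd: "d \<in> Dset n \<Longrightarrow> d dvd n" unfolding Dset_def by simp

lemma adj: "d \<in> Dset n \<Longrightarrow> e \<in> Dset n \<Longrightarrow>
   ess_adj n (Jd n d) (Jd n e) \<longleftrightarrow> d \<noteq> e \<and> (\<forall>p\<in>prime_factors n. \<not> (fullp n p d \<and> fullp n p e))"
  using ess_adj_Jd[OF n2 Dset_dvd Dset_dvd] unfolding fullp_def by blast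

lemma V_eq: "nzp_ideals n = Jd n ` Dset n"
  using nzp_Jd[OF n2] unfolding Dset_def by simp

lemma Jd_inj_on: "inj_on (Jd n) (Dset n)"
  by (rule inj_onI) (use Jd_inj[OF n2] Dset_dvd in blast)

lemma sym_adj: "ess_adj n I K \<Longrightarrow> ess_adj n K I"
proof -
  have "set_add (Zn n) I K = set_add (Zn n) K I"
    unfolding set_add_def' Zn_facts(2)[OF n2] by (auto; metis add.commute)
  thus "ess_adj n I K \<Longrightarrow> ess_adj n K I" unfolding ess_adj_def by metis
qed

lemma fin_divs: "finite {d. d dvd n}"
  using n0 by simp

lemma card_D: "card (Dset n) = (\<Prod>p\<in>prime_factors n. multiplicity p n + 1) - 2"
proof -
  have "card {d. d dvd n \<and> (\<forall>p\<in>prime_factors n. multiplicity p d \<in> {0..multiplicity p n})}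
        = (\<Prod>p\<in>prime_factors n. card {0..multiplicity p n})"
    by (rule count_divs[OF n0]) auto
  moreover have "{d. d dvd n \<and> (\<forall>p\<in>prime_factors n. multiplicity p d \<in> {0..multiplicity p n})} = {d. d dvd n}"
    using mult_le_dvd n0 by auto
  ultimately have c: "card {d. d dvd n} = (\<Prod>p\<in>prime_factors n. multiplicity p n + 1)" by simp
  have "Dset n = {d. d dvd n} - {1, n}" unfolding Dset_def by auto
  moreover have "{1, n} \<subseteq> {d. d dvd n}" by auto
  moreover have "card {1, n} = 2" using n2 by simp
  ultimately show ?thesis using c fin_divs by (simp add: card_Diff_subset)
qed

lemma card_DE: "card (DE n) = (\<Prod>p\<in>prime_factors n. multiplicity p n) - 1"
proof -
  have "card {d. d dvd n \<and> (\<forall>p\<in>prime_factors n. multiplicity p d \<in> {0..<multiplicity p n})}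
        = (\<Prod>p\<in>prime_factors n. card {0..<multiplicity p n})"
    by (rule count_divs[OF n0]) auto
  hence c: "card {d. d dvd n \<and> (\<forall>p\<in>prime_factors n. multiplicity p d \<in> {0..<multiplicity p n})}
        = (\<Prod>p\<in>prime_factors n. multiplicity p n)" by simp
  obtain p0 :: nat where "prime p0" "p0 dvd n" using prime_factor_nat[of n] n2 by auto
  hence "p0 \<in> prime_factors n" using n0 by (simp add: in_prime_factors_iff)
  hence pf: "prime_factors n \<noteq> {}" by blast
  have eq: "DE n = {d. d dvd n \<and> (\<forall>p\<in>prime_factors n. multiplicity p d \<in> {0..<multiplicity p n})} - {1}"
  proof (intro Set.set_eqI iffI)
    fix d assume "d \<in> DE n"
    hence d: "d dvd n" "d \<noteq> 1" "\<forall>p\<in>prime_factors n. \<not> fullp n p d" unfolding DE_def Dset_def by auto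
    thus "d \<in> {d. d dvd n \<and> (\<forall>p\<in>prime_factors n. multiplicity p d \<in> {0..<multiplicity p n})} - {1}"
      using mult_le_dvd[OF d(1) n0] unfolding fullp_def by (auto simp: order_le_less)
  next
    fix d assume "d \<in> {d. d dvd n \<and> (\<forall>p\<in>prime_factors n. multiplicity p d \<in> {0..<multiplicity p n})} - {1}"
    hence d: "d dvd n" "d \<noteq> 1" "\<forall>p\<in>prime_factors n. multiplicity p d < multiplicity p n" by auto
    have "d \<noteq> n" using d(3) pf by auto
    thus "d \<in> DE n" using d unfolding DE_def Dset_def fullp_def by auto
  qed
  have "1 \<in> {d. d dvd n \<and> (\<forall>p\<in>prime_factors n. multiplicity p d \<in> {0..<multiplicity p n})}"
    using mult_pos by auto
  moreover have "finite {d. d dvd n \<and> (\<forall>p\<in>prime_factors n. multiplicity p d \<in> {0..<multiplicity p n})}"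
    using fin_divs by (rule finite_subset[rotated]) auto
  ultimately show ?thesis unfolding eq using c by simp
qed

lemma card_DC:
  assumes q: "q \<in> prime_factors n"
  shows "card (DC n q) = (\<Prod>p\<in>prime_factors n - {q}. multiplicity p n)"
proof -
  define B where "B = (\<lambda>p. if p = q then {multiplicity p n} else {0..<multiplicity p n})"
  have "card {d. d dvd n \<and> (\<forall>p\<in>prime_factors n. multiplicity p d \<in> B p)}
        = (\<Prod>p\<in>prime_factors n. card (B p))"
    by (rule count_divs[OF n0]) (auto simp: B_def)
  also have "\<dots> = card (B q) * (\<Prod>p\<in>prime_factors n - {q}. card (B p))"
    using q by (simp add: prod.remove)
  also have "\<dots> = (\<Prod>p\<in>prime_factors n - {q}. multiplicity p n)"
    by (simp add: B_def)
  finally have c: "card {d. d dvd n \<and> (\<forall>p\<in>prime_factors n. multiplicity p d \<in> B p)} = (\<Prod>p\<in>prime_factors n - {q}. multiplicity p n)" .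
  have "DC n q = {d. d dvd n \<and> (\<forall>p\<in>prime_factors n. multiplicity p d \<in> B p)}"
  proof (intro Set.set_eqI iffI)
    fix d assume "d \<in> DC n q"
    hence d: "d dvd n" "fullp n q d" "\<forall>p\<in>prime_factors n - {q}. \<not> fullp n p d" unfolding DC_def by auto
    show "d \<in> {d. d dvd n \<and> (\<forall>p\<in>prime_factors n. multiplicity p d \<in> B p)}"
      using d mult_le_dvd[OF d(1) n0] unfolding fullp_def B_def by (auto simp: order_le_less)
  next
    fix d assume "d \<in> {d. d dvd n \<and> (\<forall>p\<in>prime_factors n. multiplicity p d \<in> B p)}"
    hence d: "d dvd n" "\<forall>p\<in>prime_factors n. multiplicity p d \<in> B p" by auto
    show "d \<in> DC n q" using d q unfolding DC_def fullp_def B_def by (force split: if_splits)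
  qed
  thus ?thesis using c by simp
qed

lemma DC_sub:
  assumes q: "q \<in> prime_factors n" and k: "card (prime_factors n) > 1"
  shows "DC n q \<subseteq> Dset n"
proof
  fix d assume d: "d \<in> DC n q"
  hence dd: "d dvd n" "fullp n q d" "\<forall>p\<in>prime_factors n - {q}. \<not> fullp n p d" unfolding DC_def by auto
  have "d \<noteq> 1" using dd(2) mult_pos[OF q] unfolding fullp_def by auto
  moreover have "d \<noteq> n"
  proof
    assume "d = n"
    have "card (prime_factors n - {q}) = card (prime_factors n) - 1" using q by simp
    hence "prime_factors n - {q} \<noteq> {}" using k by (metis card.empty less_numeral_extra(3) zero_less_diff)
    then obtain p where "p \<in> prime_factors n" "p \<noteq> q" by blast
    thus False using dd(3) \<open>d = n\<close> unfolding fullp_def by auto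
  qed
  ultimately show "d \<in> Dset n" using dd unfolding Dset_def by auto
qed

end


context
  fixes n :: nat
  assumes n2: "n \<ge> 2"
begin

lemma Dset_fin: "finite (Dset n)"
  using fin_divs[OF n2] unfolding Dset_def by (rule finite_subset[rotated]) auto

lemma DE_sub: "DE n \<subseteq> Dset n" unfolding DE_def by auto

lemma hub: "d \<in> DE n \<Longrightarrow> y \<in> nzp_ideals n \<Longrightarrow> y \<noteq> Jd n d \<Longrightarrow> ess_adj n (Jd n d) y"
proof -
  assume d: "d \<in> DE n" and y: "y \<in> nzp_ideals n" and ne: "y \<noteq> Jd n d"
  obtain e where e: "e \<in> Dset n" "y = Jd n e" using y V_eq[OF n2] by blast
  have dD: "d \<in> Dset n" using d DE_sub by blast
  show ?thesis using adj[OF n2 dD e(1)] d ne e unfolding DE_def by auto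
qed

lemma cross:
  assumes q: "q \<in> prime_factors n" and q': "q' \<in> prime_factors n" and qq: "q \<noteq> q'"
    and k: "card (prime_factors n) > 1"
    and c: "c \<in> Jd n ` DC n q" and c': "c' \<in> Jd n ` DC n q'"
  shows "ess_adj n c c'"
proof -
  obtain d where d: "d \<in> DC n q" "c = Jd n d" using c by blast
  obtain e where e: "e \<in> DC n q'" "c' = Jd n e" using c' by blast
  have dD: "d \<in> Dset n" and eD: "e \<in> Dset n" using DC_sub[OF n2 q k] DC_sub[OF n2 q' k] d e by auto
  have dq: "fullp n q d" and dnq: "\<forall>p\<in>prime_factors n - {q}. \<not> fullp n p d" using d(1) unfolding DC_def by blast+
  have enq: "\<forall>p\<in>prime_factors n - {q'}. \<not> fullp n p e" using e(1) unfolding DC_def by blast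
  have qP: "q \<in> prime_factors n - {q'}" using q qq by blast
  have "\<not> fullp n q e" using enq qP by blast
  hence "d \<noteq> e" using dq by metis
  moreover have "\<forall>p\<in>prime_factors n. \<not> (fullp n p d \<and> fullp n p e)"
  proof
    fix p assume p: "p \<in> prime_factors n"
    show "\<not> (fullp n p d \<and> fullp n p e)"
    proof (cases "p = q")
      case True thus ?thesis using \<open>\<not> fullp n q e\<close> by blast
    next
      case False hence "p \<in> prime_factors n - {q}" using p by blast
      thus ?thesis using dnq by blast
    qed
  qed
  ultimately show ?thesis using adj[OF n2 dD eD] d e by simp
qed

lemma cover:
  assumes k: "card (prime_factors n) > 1" and x: "x \<in> nzp_ideals n"
  shows "\<exists>q\<in>prime_factors n. \<forall>c\<in>Jd n ` DC n q. c \<noteq> x \<longrightarrow> ess_adj n x c"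
proof -
  obtain d where d: "d \<in> Dset n" "x = Jd n d" using x V_eq[OF n2] by blast
  have "d \<noteq> n" using d unfolding Dset_def by simp
  then obtain q where q: "q \<in> prime_factors n" "\<not> fullp n q d"
    using all_full[OF n2 Dset_dvd[OF n2 d(1)]] by blast
  have "\<forall>c\<in>Jd n ` DC n q. c \<noteq> x \<longrightarrow> ess_adj n x c"
  proof (intro ballI impI)
    fix c assume c: "c \<in> Jd n ` DC n q" "c \<noteq> x"
    then obtain e where e: "e \<in> DC n q" "c = Jd n e" by blast
    have eD: "e \<in> Dset n" using DC_sub[OF n2 q(1) k] e by auto
    have "d \<noteq> e" using c d e by auto
    moreover have "\<forall>p\<in>prime_factors n. \<not> (fullp n p d \<and> fullp n p e)"
    proof
      fix p assume p: "p \<in> prime_factors n"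
      have enq: "\<forall>p\<in>prime_factors n - {q}. \<not> fullp n p e" using e(1) unfolding DC_def by blast
      show "\<not> (fullp n p d \<and> fullp n p e)"
      proof (cases "p = q")
        case True thus ?thesis using q(2) by blast
      next
        case False hence "p \<in> prime_factors n - {q}" using p by blast
        thus ?thesis using enq by blast
      qed
    qed
    ultimately show "ess_adj n x c" using adj[OF n2 d(1) eD] d e by simp
  qed
  thus ?thesis using q by blast
qed

lemma disj_E_C:
  assumes q: "q \<in> prime_factors n" and k: "card (prime_factors n) > 1"
  shows "Jd n ` DE n \<inter> Jd n ` DC n q = {}"
proof -
  have "Jd n ` DE n \<inter> Jd n ` DC n q = Jd n ` (DE n \<inter> DC n q)"
    using inj_on_image_Int[OF Jd_inj_on[OF n2] DE_sub DC_sub[OF n2 q k]] by (rule sym)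
  moreover have "DE n \<inter> DC n q = {}" using q unfolding DE_def DC_def by auto
  ultimately show ?thesis by simp
qed

lemma disj_C_C:
  assumes q: "q \<in> prime_factors n" and q': "q' \<in> prime_factors n" and qq: "q \<noteq> q'"
    and k: "card (prime_factors n) > 1"
  shows "Jd n ` DC n q \<inter> Jd n ` DC n q' = {}"
proof -
  have "Jd n ` DC n q \<inter> Jd n ` DC n q' = Jd n ` (DC n q \<inter> DC n q')"
    using inj_on_image_Int[OF Jd_inj_on[OF n2] DC_sub[OF n2 q k] DC_sub[OF n2 q' k]] by (rule sym)
  moreover have "DC n q \<inter> DC n q' = {}" using q qq unfolding DC_def by auto
  ultimately show ?thesis by simp
qed

lemma card_Ess: "card (Jd n ` DE n) = (\<Prod>p\<in>prime_factors n. multiplicity p n) - 1"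
  using card_image[OF inj_on_subset[OF Jd_inj_on[OF n2] DE_sub]] card_DE[OF n2] by simp

lemma card_C: "q \<in> prime_factors n \<Longrightarrow> card (prime_factors n) > 1 \<Longrightarrow>
    card (Jd n ` DC n q) = (\<Prod>p\<in>prime_factors n - {q}. multiplicity p n)"
  using card_image[OF inj_on_subset[OF Jd_inj_on[OF n2] DC_sub[OF n2]]] card_DC[OF n2] by simp

lemma iso_vertex:
  assumes q0: "q0 \<in> prime_factors n" and k: "card (prime_factors n) > 1"
  shows "\<exists>v\<in>nzp_ideals n. v \<notin> Jd n ` DE n \<union> Jd n ` DC n q0 \<and>
           (\<forall>y\<in>nzp_ideals n. ess_adj n v y \<longrightarrow> y \<in> Jd n ` DE n \<union> Jd n ` DC n q0)"
proof -
  have n0: "n > 0" using n2 by simp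
  have pp: "prime q0" using q0 by (simp add: in_prime_factors_iff)
  define M where "M = multiplicity q0 n"
  have M0: "M > 0" unfolding M_def using mult_pos[OF n2 q0] .
  define vd where "vd = n div q0 ^ M"
  have pMn: "q0 ^ M dvd n" unfolding M_def by (rule multiplicity_dvd)
  have nf: "n = q0 ^ M * vd" unfolding vd_def using pMn by simp
  have vd0: "vd > 0" using nf n0 by (auto intro: Nat.gr0I)
  have vdn: "vd dvd n" using nf by simp
  have pM0: "q0 ^ M \<noteq> 0" using pp by simp
  have mq: "multiplicity p n = multiplicity p (q0 ^ M) + multiplicity p vd" if "prime p" for p
    using nf pM0 vd0 that by (simp add: prime_elem_multiplicity_mult_distrib)
  have fo: "fullp n p vd" if "p \<in> prime_factors n" "p \<noteq> q0" for p
  proof -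
    have "prime p" using that by (simp add: in_prime_factors_iff)
    hence "multiplicity p (q0 ^ M) = 0" using pp that by (simp add: multiplicity_distinct_prime_power)
    thus ?thesis using mq[OF \<open>prime p\<close>] unfolding fullp_def by simp
  qed
  have nfq: "\<not> fullp n q0 vd"
  proof -
    have a: "multiplicity q0 (q0 ^ M) = M" using pp by simp
    have b: "multiplicity q0 n = multiplicity q0 (q0 ^ M) + multiplicity q0 vd" using mq[OF pp] .
    have c: "multiplicity q0 n = M" using M_def by simp
    have "multiplicity q0 vd = 0" using a b c by linarith
    thus ?thesis using M0 c unfolding fullp_def by linarith
  qed
  have "card (prime_factors n - {q0}) = card (prime_factors n) - 1" using q0 by simp
  hence "prime_factors n - {q0} \<noteq> {}" using k by (metis card.empty less_numeral_extra(3) zero_less_diff)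
  then obtain q1 where q1: "q1 \<in> prime_factors n" "q1 \<noteq> q0" by blast
  have "vd \<noteq> 1" using fo[OF q1] mult_pos[OF n2 q1(1)] unfolding fullp_def by auto
  moreover have "vd \<noteq> n" using nfq unfolding fullp_def by auto
  ultimately have vdD: "vd \<in> Dset n" using vdn unfolding Dset_def by auto
  have vV: "Jd n vd \<in> nzp_ideals n" using vdD V_eq[OF n2] by blast
  have notE: "vd \<notin> DE n" using fo[OF q1] q1 unfolding DE_def by auto
  have notC: "vd \<notin> DC n q0" using nfq unfolding DC_def by auto
  have "Jd n vd \<notin> Jd n ` DE n"
    using notE vdD inj_on_image_mem_iff[OF Jd_inj_on[OF n2] vdD DE_sub] by blast
  moreover have "Jd n vd \<notin> Jd n ` DC n q0"
    using notC vdD inj_on_image_mem_iff[OF Jd_inj_on[OF n2] vdD DC_sub[OF n2 q0 k]] by blast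
  moreover have "\<forall>y\<in>nzp_ideals n. ess_adj n (Jd n vd) y \<longrightarrow> y \<in> Jd n ` DE n \<union> Jd n ` DC n q0"
  proof (intro ballI impI)
    fix y assume y: "y \<in> nzp_ideals n" and a: "ess_adj n (Jd n vd) y"
    obtain e where e: "e \<in> Dset n" "y = Jd n e" using y V_eq[OF n2] by blast
    have nf2: "\<forall>p\<in>prime_factors n. \<not> (fullp n p vd \<and> fullp n p e)" using adj[OF n2 vdD e(1)] a e by simp
    have ep: "\<forall>p\<in>prime_factors n - {q0}. \<not> fullp n p e" using nf2 fo by blast
    show "y \<in> Jd n ` DE n \<union> Jd n ` DC n q0"
    proof (cases "fullp n q0 e")
      case True
      hence "e \<in> DC n q0" using ep e(1) unfolding DC_def Dset_def by auto
      thus ?thesis using e by blast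
    next
      case False
      hence "e \<in> DE n" using ep e(1) unfolding DE_def by auto
      thus ?thesis using e by blast
    qed
  qed
  ultimately show ?thesis using vV by blast
qed

end


lemma general_k:
  fixes n :: nat
  assumes n2: "n \<ge> 2" and k: "card (prime_factors n) > 1"
  shows "vertex_connectivity (nzp_ideals n) (ess_adj n) =
     ((\<Prod>p\<in>prime_factors n. multiplicity p n) - 1) +
      Min ((\<lambda>q. \<Prod>p\<in>prime_factors n - {q}. multiplicity p n) ` prime_factors n)"
proof -
  define P where "P = prime_factors n"
  define V where "V = nzp_ideals n"
  define Ess where "Ess = Jd n ` DE n"
  define Cq where "Cq = (\<lambda>q. Jd n ` DC n q)"
  define mm where "mm = (\<Prod>p\<in>P. multiplicity p n) - 1"
  define eta where "eta = Min ((\<lambda>q. \<Prod>p\<in>P - {q}. multiplicity p n) ` P)"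
  have fP: "finite P" unfolding P_def by simp
  have Pne: "P \<noteq> {}" using k unfolding P_def by auto
  have fV: "finite V" unfolding V_def V_eq[OF n2] using Dset_fin[OF n2] by simp
  have EssV: "Ess \<subseteq> V" unfolding Ess_def V_def V_eq[OF n2] using DE_sub[OF n2] by blast
  have CV: "q \<in> P \<Longrightarrow> Cq q \<subseteq> V" for q
    unfolding Cq_def V_def V_eq[OF n2] using DC_sub[OF n2 _ k] P_def by blast
  have cE: "card Ess = mm" unfolding Ess_def mm_def P_def by (rule card_Ess[OF n2])
  have cC: "q \<in> P \<Longrightarrow> card (Cq q) = (\<Prod>p\<in>P - {q}. multiplicity p n)" for q
    unfolding Cq_def P_def using card_C[OF n2 _ k] by simp
  have eta_le: "q \<in> P \<Longrightarrow> eta \<le> card (Cq q)" for q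
    unfolding eta_def using cC fP by simp
  have "eta \<in> (\<lambda>q. \<Prod>p\<in>P - {q}. multiplicity p n) ` P"
    unfolding eta_def using fP Pne by (intro Min_in) auto
  then obtain q0 where q0a: "q0 \<in> P" "eta = (\<Prod>p\<in>P - {q0}. multiplicity p n)" by blast
  have q0: "q0 \<in> P" "eta = card (Cq q0)" using q0a cC[OF q0a(1)] by auto
  have dEC: "q \<in> P \<Longrightarrow> Ess \<inter> Cq q = {}" for q
    unfolding Ess_def Cq_def P_def using disj_E_C[OF n2 _ k] by simp
  have fin_sub: "X \<subseteq> V \<Longrightarrow> finite X" for X using fV finite_subset by blast
  have cEC: "q \<in> P \<Longrightarrow> card (Ess \<union> Cq q) = mm + card (Cq q)" for q
    using card_Un_disjoint[OF fin_sub[OF EssV] fin_sub[OF CV] dEC] cE by simp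
  have "card (P - {q0}) = card P - 1" using q0 by simp
  hence "P - {q0} \<noteq> {}" using k unfolding P_def by (metis card.empty less_numeral_extra(3) zero_less_diff)
  then obtain q1 where q1: "q1 \<in> P" "q1 \<noteq> q0" by blast
  have Vbig: "card V - 1 \<ge> mm + eta"
  proof -
    have pos: "(\<Prod>p\<in>P - {q1}. multiplicity p n) > 0"
      using mult_pos[OF n2] unfolding P_def by (intro prod_pos) auto
    have "Cq q0 \<inter> Cq q1 = {}" unfolding Cq_def using disj_C_C[OF n2 _ _ _ k] q0 q1 P_def by simp
    hence "Ess \<union> Cq q0 \<union> Cq q1 \<subseteq> V" "(Ess \<union> Cq q0) \<inter> Cq q1 = {}"
      using EssV CV[OF q0(1)] CV[OF q1(1)] dEC[OF q1(1)] by auto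
    hence "card (Ess \<union> Cq q0 \<union> Cq q1) = card (Ess \<union> Cq q0) + card (Cq q1)"
      using fin_sub by (intro card_Un_disjoint) auto
    moreover have "card (Ess \<union> Cq q0 \<union> Cq q1) \<le> card V"
      using \<open>Ess \<union> Cq q0 \<union> Cq q1 \<subseteq> V\<close> fV by (rule card_mono[rotated])
    ultimately show ?thesis using cEC[OF q0(1)] q0(2) cC[OF q1(1)] pos by simp
  qed
  have symE: "\<And>x y. ess_adj n x y \<Longrightarrow> ess_adj n y x" using sym_adj[OF n2] by blast
  have "vertex_connectivity V (ess_adj n) = mm + eta"
  proof (rule VC_eq[OF fV])
    fix S assume SV: "S \<subseteq> V" and valid: "\<not> connected_in (ess_adj n) (V - S) \<or> card (V - S) \<le> 1"
    show "mm + eta \<le> card S"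
    proof (cases "Ess \<subseteq> S")
      case False
      then obtain h where h: "h \<in> Ess" "h \<notin> S" by blast
      obtain d where d: "d \<in> DE n" "h = Jd n d" using h unfolding Ess_def by blast
      have "card V - 1 \<le> card S"
      proof (rule L_hub[OF fV SV valid symE])
        show "h \<in> V" using h EssV by blast
        show "h \<notin> S" by (rule h(2))
        fix y assume "y \<in> V" "y \<noteq> h"
        thus "ess_adj n h y" using hub[OF n2 d(1)] d unfolding V_def by simp
      qed
      thus ?thesis using Vbig by simp
    next
      case True
      show ?thesis
      proof (cases "\<exists>q\<in>P. Cq q \<subseteq> S")
        case True
        then obtain q where q: "q \<in> P" "Cq q \<subseteq> S" by blast
        have "card (Ess \<union> Cq q) \<le> card S" using \<open>Ess \<subseteq> S\<close> q(2) fin_sub[OF SV]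
          by (intro card_mono) auto
        thus ?thesis using cEC[OF q(1)] eta_le[OF q(1)] by simp
      next
        case False
        have "card V - 1 \<le> card S"
        proof (rule L_classes[OF fV SV valid symE, where Q=P and C=Cq])
          show "\<And>q. q \<in> P \<Longrightarrow> Cq q \<subseteq> V" by (rule CV)
          show "\<And>q q' c c'. q \<in> P \<Longrightarrow> q' \<in> P \<Longrightarrow> q \<noteq> q' \<Longrightarrow> c \<in> Cq q \<Longrightarrow> c' \<in> Cq q' \<Longrightarrow> ess_adj n c c'"
            unfolding Cq_def P_def using cross[OF n2 _ _ _ k] by blast
          show "\<And>x. x \<in> V \<Longrightarrow> \<exists>q\<in>P. \<forall>c\<in>Cq q. c \<noteq> x \<longrightarrow> ess_adj n x c"
            unfolding Cq_def P_def V_def using cover[OF n2 k] by blast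
          show "\<And>q. q \<in> P \<Longrightarrow> \<not> Cq q \<subseteq> S" using False by blast
        qed
        thus ?thesis using Vbig by simp
      qed
    qed
  next
    have "\<exists>v\<in>V. v \<notin> Ess \<union> Cq q0 \<and> (\<forall>y\<in>V. ess_adj n v y \<longrightarrow> y \<in> Ess \<union> Cq q0)"
      using iso_vertex[OF n2 _ k] q0(1) unfolding V_def Ess_def Cq_def P_def by simp
    then obtain v where v: "v \<in> V" "v \<notin> Ess \<union> Cq q0" "\<forall>y\<in>V. ess_adj n v y \<longrightarrow> y \<in> Ess \<union> Cq q0"
      by blast
    show "Ess \<union> Cq q0 \<subseteq> V" using EssV CV[OF q0(1)] by blast
    show "\<not> connected_in (ess_adj n) (V - (Ess \<union> Cq q0)) \<or> card (V - (Ess \<union> Cq q0)) \<le> 1"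
      by (rule isolated_vertex[OF v(1) v(2)]) (use v(3) in blast)
    show "card (Ess \<union> Cq q0) = mm + eta" using cEC[OF q0(1)] q0(2) by simp
  qed
  thus ?thesis unfolding V_def mm_def eta_def P_def .
qed



lemma k_one:
  fixes n :: nat
  assumes n2: "n \<ge> 2" and k: "card (prime_factors n) = 1"
    and big: "\<forall>p\<in>prime_factors n. multiplicity p n > 2"
  shows "vertex_connectivity (nzp_ideals n) (ess_adj n) =
     ((\<Prod>p\<in>prime_factors n. multiplicity p n + 1) - 2) - 1"
proof -
  define V where "V = nzp_ideals n"
  obtain p0 where p0: "prime_factors n = {p0}" using k card_1_singletonE by blast
  have DE_all: "d \<in> DE n" if d: "d \<in> Dset n" for d
  proof -
    have "\<not> fullp n p0 d"
    proof
      assume "fullp n p0 d"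
      hence "\<forall>p\<in>prime_factors n. fullp n p d" using p0 by simp
      hence "d = n" using all_full[OF n2 Dset_dvd[OF n2 d]] by simp
      thus False using d unfolding Dset_def by simp
    qed
    thus ?thesis using d p0 unfolding DE_def by simp
  qed
  have fV: "finite V" unfolding V_def V_eq[OF n2] using Dset_fin[OF n2] by simp
  have cV: "card V = (\<Prod>p\<in>prime_factors n. multiplicity p n + 1) - 2"
    unfolding V_def V_eq[OF n2] using card_image[OF Jd_inj_on[OF n2]] card_D[OF n2] by simp
  have "multiplicity p0 n > 2" using big p0 by simp
  hence "card V \<ge> 2" using cV p0 by simp
  hence "V \<noteq> {}" by auto
  then obtain v where v: "v \<in> V" by blast
  have symE: "\<And>x y. ess_adj n x y \<Longrightarrow> ess_adj n y x" using sym_adj[OF n2] by blast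
  have "vertex_connectivity V (ess_adj n) = card V - 1"
  proof (rule VC_eq[OF fV])
    fix S assume SV: "S \<subseteq> V" and valid: "\<not> connected_in (ess_adj n) (V - S) \<or> card (V - S) \<le> 1"
    show "card V - 1 \<le> card S"
    proof (cases "V \<subseteq> S")
      case True
      hence "card V \<le> card S" using SV fV by (simp add: subset_antisym)
      thus ?thesis by simp
    next
      case False
      then obtain h where h: "h \<in> V" "h \<notin> S" by blast
      obtain d where d: "d \<in> Dset n" "h = Jd n d" using h unfolding V_def V_eq[OF n2] by blast
      show ?thesis
      proof (rule L_hub[OF fV SV valid symE h])
        fix y assume "y \<in> V" "y \<noteq> h"
        thus "ess_adj n h y" using hub[OF n2 DE_all[OF d(1)]] d unfolding V_def by simp
      qed
    qed
  next
    show "V - {v} \<subseteq> V" by blast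
    have "V - (V - {v}) = {v}" using v by blast
    thus "\<not> connected_in (ess_adj n) (V - (V - {v})) \<or> card (V - (V - {v})) \<le> 1" by simp
    show "card (V - {v}) = card V - 1" using v fV by simp
  qed
  thus ?thesis using cV unfolding V_def by simp
qed

theorem mainTheorem16:
  fixes n :: nat
  assumes "n \<ge> 2"
    and "\<not> prime n"
    and "\<not> (\<exists>p. prime p \<and> n = p ^ 2)"
  defines "P \<equiv> prime_factors n"
    and "k \<equiv> card (prime_factors n)"
    and "T \<equiv> (\<Prod>p\<in>prime_factors n. multiplicity p n + 1) - 2"
    and "m \<equiv> (\<Prod>p\<in>prime_factors n. multiplicity p n) - 1"
    and "\<eta> \<equiv> Min ((\<lambda>q. \<Prod>p\<in>prime_factors n - {q}. multiplicity p n) ` prime_factors n)"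
    and "\<kappa> \<equiv> vertex_connectivity (nzp_ideals n) (ess_adj n)"
  shows "(k = 1 \<and> (\<forall>p\<in>P. multiplicity p n > 2) \<longrightarrow> \<kappa> = T - 1)
       \<and> (k > 1 \<and> (\<forall>p\<in>P. multiplicity p n = 1) \<longrightarrow> \<kappa> = 1)
       \<and> (k > 1 \<and> (\<exists>p\<in>P. multiplicity p n > 1) \<longrightarrow> \<kappa> = m + \<eta>)"
proof (intro conjI impI)
  assume "k = 1 \<and> (\<forall>p\<in>P. multiplicity p n > 2)"
  thus "\<kappa> = T - 1" using k_one[OF assms(1)] unfolding \<kappa>_def T_def k_def P_def by blast
next
  assume a: "k > 1 \<and> (\<forall>p\<in>P. multiplicity p n = 1)"
  have g: "\<kappa> = m + \<eta>" using general_k[OF assms(1)] a unfolding \<kappa>_def m_def \<eta>_def k_def by blast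
  have "m = 0" unfolding m_def using a P_def by simp
  moreover have "\<eta> = 1"
  proof -
    have "P \<noteq> {}" using a unfolding k_def P_def by auto
    have "(\<lambda>q. \<Prod>p\<in>prime_factors n - {q}. multiplicity p n) ` prime_factors n = {1}"
      using a \<open>P \<noteq> {}\<close> unfolding P_def by auto
    thus ?thesis unfolding \<eta>_def by simp
  qed
  ultimately show "\<kappa> = 1" using g by simp
next
  assume a: "k > 1 \<and> (\<exists>p\<in>P. multiplicity p n > 1)"
  thus "\<kappa> = m + \<eta>" using general_k[OF assms(1)] unfolding \<kappa>_def m_def \<eta>_def k_def by blast
qed



end
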